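(* Let $d,m,n\ge1$, $\alpha=\omega^d\cdot m$, $k\ge1$, $i\ge0$. Suppose that $(X_\ell:\ell<2^in-2^i+1)$ is a stack of $(\alpha,k,i)$-persistent sets. Then $\bigcup_\ell X_\ell$ is $(\alpha\cdot n,k,i)$-persistent, where $\alpha\cdot n$ denotes $\omega^d\cdot(mn)$.
   Context: Strings are finite binary strings with $\preceq$ the initial-segment order; $2^i$ also denotes the set of strings of length $i$; a tree is a set of strings closed under initial segments; a leaf of a finite tree is a $\preceq$-maximal element. For finite $X=\{x_0<\dots<x_n\}$, a finite tree $T$ is $X$-quasistrong if $T\cap 2^{x_i}\ne\emptyset$ for all $i\le n$ and for each $i<n$ every $\sigma\in T\cap2^{x_i}$ has exactly two incompatible extensions in $T\cap 2^{x_{i+1}}$. A stack is a sequence $(X_\ell:\ell<N)$ of nonempty finite sets with $\max X_\ell<\min X_{\ell+1}$. Largeness: $X$ is $\omega$-large if $|X|>\min X$; $X$ is $\omega^d\cdot n$-large if it is the union of a stack of $n$ many $\omega^d$-large sets; $X$ is $\omega^{d+1}$-large if $X=\{\min X\}\cup X_1$ with $\min X_1>\min X$ and $X_1$ $\omega^d\cdot\min X$-large. Persistence ($d,m,k\ge1$, $\alpha=\omega^d\cdot m$, $X$ nonempty finite): $X$ is $(\alpha,k,0)$-persistent iff $\alpha$-large; for $i\ge1$, $X$ is $(\alpha,k,i)$-persistent iff $X$ contains an $(\alpha,k,i-1)$-persistent subset $Y$ such that for every $X$-quasistrong tree $T$ and every $C:T\cap 2^{\max X}\to k$ there exist $c<k$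 and a $Y$-quasistrong finite tree $S\subseteq T$ all of whose leaves have extensions in $C^{-1}(c)$. *)

theory Defs
  imports Main "HOL-Library.Sublist"
begin

text \<open>Strings are finite binary strings (bool lists); the initial-segment order is
  the library's prefix order; the strings of length i are those with length i.\<close>

definition is_tree :: "bool list set \<Rightarrow> bool" where
  "is_tree T \<longleftrightarrow> (\<forall>\<sigma>\<in>T. \<forall>\<tau>. prefix \<tau> \<sigma> \<longrightarrow> \<tau> \<in> T)"

definition leaves :: "bool list set \<Rightarrow> bool list set" where
  "leaves T = {\<sigma> \<in> T. \<not> (\<exists>\<tau>\<in>T. strict_prefix \<sigma> \<tau>)}"

definition quasistrong :: "nat set \<Rightarrow> bool list set \<Rightarrow> bool" where
  "quasistrong X T \<longleftrightarrow> finite X \<and> X \<noteq> {} \<and> finite T \<and> is_tree T \<and>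
     (\<forall>x\<in>X. \<exists>\<sigma>\<in>T. length \<sigma> = x) \<and>
     (\<forall>x\<in>X. \<forall>x'\<in>X. x < x' \<and> (\<forall>z\<in>X. \<not> (x < z \<and> z < x')) \<longrightarrow>
        (\<forall>\<sigma>\<in>T. length \<sigma> = x \<longrightarrow>
           (\<exists>\<tau>1 \<tau>2. {\<tau>\<in>T. length \<tau> = x' \<and> prefix \<sigma> \<tau>} = {\<tau>1, \<tau>2} \<and>
                     \<not> prefix \<tau>1 \<tau>2 \<and> \<not> prefix \<tau>2 \<tau>1)))"

definition is_stack :: "nat set list \<Rightarrow> bool" where
  "is_stack Xs \<longleftrightarrow> (\<forall>Y\<in>set Xs. finite Y \<and> Y \<noteq> {}) \<and>
     (\<forall>l. Suc l < length Xs \<longrightarrow> Max (Xs ! l) < Min (Xs ! Suc l))"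

text \<open>large_aux e X  means  X is omega^(e+1)-large.\<close>

primrec large_aux :: "nat \<Rightarrow> nat set \<Rightarrow> bool" where
  "large_aux 0 X \<longleftrightarrow> finite X \<and> X \<noteq> {} \<and> card X > Min X"
| "large_aux (Suc e) X \<longleftrightarrow> finite X \<and> X \<noteq> {} \<and>
     (\<exists>Xs. is_stack Xs \<and> length Xs = Min X \<and> (\<forall>Y\<in>set Xs. large_aux e Y) \<and>
           X - {Min X} = \<Union>(set Xs))"

definition omega_pow_large :: "nat \<Rightarrow> nat set \<Rightarrow> bool" where
  "omega_pow_large d X \<longleftrightarrow> d \<ge> 1 \<and> large_aux (d - 1) X"

definition omega_mult_large :: "nat \<Rightarrow> nat \<Rightarrow> nat set \<Rightarrow> bool" where
  "omega_mult_large d n X \<longleftrightarrow>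
     (\<exists>Xs. is_stack Xs \<and> length Xs = n \<and> (\<forall>Y\<in>set Xs. omega_pow_large d Y) \<and>
           X = \<Union>(set Xs))"

text \<open>(omega^d * m, k, i)-persistence. Colourings C : T \<inter> 2^(max X) \<rightarrow> k are modelled
  as functions on strings whose values on T \<inter> 2^(max X) are below k.\<close>

primrec persistent :: "nat \<Rightarrow> nat \<Rightarrow> nat \<Rightarrow> nat \<Rightarrow> nat set \<Rightarrow> bool" where
  "persistent d m k 0 X \<longleftrightarrow> finite X \<and> X \<noteq> {} \<and> omega_mult_large d m X"
| "persistent d m k (Suc i) X \<longleftrightarrow> finite X \<and> X \<noteq> {} \<and>
     (\<exists>Y. Y \<subseteq> X \<and> persistent d m k i Y \<and>
        (\<forall>T (C :: bool list \<Rightarrow> nat).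
            quasistrong X T \<and> (\<forall>\<sigma>\<in>T. length \<sigma> = Max X \<longrightarrow> C \<sigma> < k) \<longrightarrow>
            (\<exists>c<k. \<exists>S. S \<subseteq> T \<and> quasistrong Y S \<and>
               (\<forall>\<rho>\<in>leaves S. \<exists>\<tau>\<in>T. length \<tau> = Max X \<and> prefix \<rho> \<tau> \<and> C \<tau> = c))))"

end

theory Submission
  imports Defs
begin

lemma prefix_take_eq: "prefix a b \<Longrightarrow> take (length a) b = a"
  by (auto simp: prefix_def)

lemma prefix_same_len: "prefix a b \<Longrightarrow> length a = length b \<Longrightarrow> a = b"
  by (metis prefix_take_eq take_all order_refl)

lemma take_prefix_mono: "z \<le> z' \<Longrightarrow> prefix (take z f) (take z' f)"
  by (metis min.absorb1 take_is_prefix take_take)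

lemma leaf_above: assumes "finite S" "\<sigma> \<in> S" shows "\<exists>l\<in>leaves S. prefix \<sigma> l"
proof -
  let ?A = "{\<tau>\<in>S. prefix \<sigma> \<tau>}"
  have fin: "finite (length ` ?A)" using assms by auto
  have ne: "\<sigma> \<in> ?A" using assms by auto
  have "Max (length ` ?A) \<in> length ` ?A" using fin ne by (intro Max_in) auto
  then obtain l where l: "l \<in> ?A" "length l = Max (length ` ?A)" by (metis (no_types, lifting) imageE)
  have "l \<in> leaves S"
  proof -
    { fix \<tau> assume a: "\<tau> \<in> S" "strict_prefix l \<tau>"
      then have "\<tau> \<in> ?A" using l by (auto intro: prefix_order.trans)
      then have "length \<tau> \<le> length l" using l fin by simp
      with prefix_length_less[OF a(2)] have False by simp }
    then show ?thesis using l unfolding leaves_def by auto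
  qed
  then show ?thesis using l by auto
qed

definition dcl :: "bool list set \<Rightarrow> bool list set" where "dcl F = {\<sigma>. \<exists>f\<in>F. prefix \<sigma> f}"

definition qs :: "nat set \<Rightarrow> bool list set \<Rightarrow> bool" where
 "qs Z F \<longleftrightarrow> finite Z \<and> Z \<noteq> {} \<and> finite F \<and> F \<noteq> {} \<and> (\<forall>f\<in>F. length f = Max Z) \<and>
   (\<forall>z\<in>Z. \<forall>z'\<in>Z. z < z' \<and> (\<forall>w\<in>Z. \<not> (z < w \<and> w < z')) \<longrightarrow>
     (\<forall>f\<in>F. \<exists>a b. take z' ` {g\<in>F. take z g = take z f} = {a,b} \<and> \<not> prefix a b \<and> \<not> prefix b a))"

lemma qs_ne: "qs Z F \<Longrightarrow> F \<noteq> {}" by (simp add: qs_def)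
lemma qs_finite: "qs Z F \<Longrightarrow> finite F" by (simp add: qs_def)
lemma qs_len: "qs Z F \<Longrightarrow> f \<in> F \<Longrightarrow> length f = Max Z" by (simp add: qs_def)
lemma qs_Z: "qs Z F \<Longrightarrow> finite Z \<and> Z \<noteq> {}" by (simp add: qs_def)
lemma qs_br: "qs Z F \<Longrightarrow> z \<in> Z \<Longrightarrow> z' \<in> Z \<Longrightarrow> z < z' \<Longrightarrow> \<forall>w\<in>Z. \<not> (z < w \<and> w < z') \<Longrightarrow> f \<in> F \<Longrightarrow>
   \<exists>a b. take z' ` {g\<in>F. take z g = take z f} = {a,b} \<and> \<not> prefix a b \<and> \<not> prefix b a"
  unfolding qs_def by blast

lemma qs_up:
  assumes "quasistrong U T" "\<sigma> \<in> T" "length \<sigma> \<in> U" "u \<in> U" "length \<sigma> \<le> u"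
  shows "\<exists>\<tau>\<in>T. length \<tau> = u \<and> prefix \<sigma> \<tau>"
  using assms(4,5)
proof (induction u rule: less_induct)
  case (less u)
  show ?case
  proof (cases "u = length \<sigma>")
    case True then show ?thesis using assms(2) by auto
  next
    case False
    let ?W = "{w\<in>U. w < u}"
    have finU: "finite U" using assms(1) unfolding quasistrong_def by auto
    have ne: "length \<sigma> \<in> ?W" using False less.prems assms(3) by auto
    have finW: "finite ?W" using finU by auto
    define u' where "u' = Max ?W"
    have u'W: "u' \<in> ?W" unfolding u'_def using Max_in[OF finW] ne by blast
    have "length \<sigma> \<le> u'" unfolding u'_def using Max_ge[OF finW ne] .
    then obtain \<tau>' where \<tau>': "\<tau>' \<in> T" "length \<tau>' = u'" "prefix \<sigma> \<tau>'" using less.IH[of u'] u'W by auto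
    have cons: "\<forall>w\<in>U. \<not> (u' < w \<and> w < u)" using Max_ge[OF finW] unfolding u'_def by (metis (no_types, lifting) mem_Collect_eq not_le)
    from assms(1) have "\<exists>a b. {\<tau>\<in>T. length \<tau> = u \<and> prefix \<tau>' \<tau>} = {a,b} \<and> \<not> prefix a b \<and> \<not> prefix b a"
      unfolding quasistrong_def using u'W less.prems(1) cons \<tau>' by blast
    then obtain a b where ab: "{\<tau>\<in>T. length \<tau> = u \<and> prefix \<tau>' \<tau>} = {a,b}" by blast
    then have "a \<in> T" "length a = u" "prefix \<tau>' a" by auto
    then show ?thesis using \<tau>' prefix_order.trans by blast
  qed
qed

lemma quasistrong_qs:
  assumes "quasistrong Z S"
  shows "qs Z {\<sigma>\<in>S. length \<sigma> = Max Z}"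
proof -
  let ?F = "{\<sigma>\<in>S. length \<sigma> = Max Z}"
  have fZ: "finite Z" "Z \<noteq> {}" and fS: "finite S" and tr: "is_tree S" and lev: "\<forall>x\<in>Z. \<exists>\<sigma>\<in>S. length \<sigma> = x"
    using assms unfolding quasistrong_def by auto
  have MZ: "Max Z \<in> Z" using fZ by simp
  then have ne: "?F \<noteq> {}" using lev by auto
  have br: "take z' ` {g\<in>?F. take z g = take z f} = {\<tau>\<in>S. length \<tau> = z' \<and> prefix (take z f) \<tau>}"
    if "z\<in>Z" "z'\<in>Z" "z<z'" "f \<in> ?F" for z z' f
  proof
    have zle: "z' \<le> Max Z" using that fZ by simp
    show "take z' ` {g\<in>?F. take z g = take z f} \<subseteq> {\<tau>\<in>S. length \<tau> = z' \<and> prefix (take z f) \<tau>}"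
    proof
      fix \<tau> assume "\<tau> \<in> take z' ` {g\<in>?F. take z g = take z f}"
      then obtain g where g: "g \<in> ?F" "take z g = take z f" "\<tau> = take z' g" by auto
      have "\<tau> \<in> S" using tr g unfolding is_tree_def using take_is_prefix by blast
      moreover have "length \<tau> = z'" using g zle by simp
      moreover have "prefix (take z f) \<tau>" using g \<open>z<z'\<close> take_prefix_mono by (metis less_imp_le)
      ultimately show "\<tau> \<in> {\<tau>\<in>S. length \<tau> = z' \<and> prefix (take z f) \<tau>}" by simp
    qed
    show "{\<tau>\<in>S. length \<tau> = z' \<and> prefix (take z f) \<tau>} \<subseteq> take z' ` {g\<in>?F. take z g = take z f}"
    proof
      fix \<tau> assume \<tau>: "\<tau> \<in> {\<tau>\<in>S. length \<tau> = z' \<and> prefix (take z f) \<tau>}"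
      then obtain g where g: "g \<in> S" "length g = Max Z" "prefix \<tau> g"
        using qs_up[OF assms, of \<tau> "Max Z"] \<open>z'\<in>Z\<close> zle MZ by auto
      have t: "\<tau> = take z' g" using g \<tau> prefix_take_eq by fastforce
      have lf: "length (take z f) = z" using that zle by auto
      have "take z \<tau> = take z f" using \<tau> prefix_take_eq lf by fastforce
      then have "take z g = take z f" using t \<open>z<z'\<close> by simp
      then show "\<tau> \<in> take z' ` {g\<in>?F. take z g = take z f}" using t g by auto
    qed
  qed
  show ?thesis unfolding qs_def
  proof (intro conjI ballI impI)
    show "finite ?F" using fS by simp
  next
    fix z z' f assume zz: "z \<in> Z" "z' \<in> Z" and c: "z < z' \<and> (\<forall>w\<in>Z. \<not> (z < w \<and> w < z'))" and f: "f \<in> ?F"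
    have zle: "z' \<le> Max Z" using zz fZ by simp
    have s: "take z f \<in> S" using tr f unfolding is_tree_def using take_is_prefix by blast
    have "length (take z f) = z" using f c zle by auto
    then obtain a b where "{\<tau>\<in>S. length \<tau> = z' \<and> prefix (take z f) \<tau>} = {a,b} \<and> \<not> prefix a b \<and> \<not> prefix b a"
      using assms zz c s unfolding quasistrong_def by blast
    then show "\<exists>a b. take z' ` {g\<in>?F. take z g = take z f} = {a,b} \<and> \<not> prefix a b \<and> \<not> prefix b a"
      using br[OF zz] c f by auto
  qed (use fZ ne in auto)
qed


lemma dcl_take: assumes "\<sigma> \<in> dcl F" shows "\<exists>f\<in>F. \<sigma> = take (length \<sigma>) f"
proof -
  obtain f where f: "f \<in> F" "prefix \<sigma> f" using assms unfolding dcl_def by blast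
  have "take (length \<sigma>) f = \<sigma>" using prefix_take_eq[OF f(2)] .
  then have "\<sigma> = take (length \<sigma>) f" by (rule sym)
  with f(1) show ?thesis by blast
qed

lemma qs_D: assumes "qs Z F" shows "quasistrong Z (dcl F)"
proof -
  have fZ: "finite Z" "Z \<noteq> {}" and fF: "finite F" "F \<noteq> {}" and len: "\<forall>f\<in>F. length f = Max Z"
    and br: "\<forall>z\<in>Z. \<forall>z'\<in>Z. z < z' \<and> (\<forall>w\<in>Z. \<not> (z < w \<and> w < z')) \<longrightarrow>
     (\<forall>f\<in>F. \<exists>a b. take z' ` {g\<in>F. take z g = take z f} = {a,b} \<and> \<not> prefix a b \<and> \<not> prefix b a)"
    using assms unfolding qs_def by auto
  have "dcl F = (\<Union>f\<in>F. set (prefixes f))" unfolding dcl_def by auto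
  then have fin: "finite (dcl F)" using fF by simp
  have tree: "is_tree (dcl F)" unfolding is_tree_def dcl_def using prefix_order.trans by blast
  have lev: "\<forall>x\<in>Z. \<exists>\<sigma>\<in>dcl F. length \<sigma> = x"
  proof
    fix x assume "x \<in> Z"
    then have "x \<le> Max Z" using fZ by simp
    obtain f where "f \<in> F" using fF by auto
    then show "\<exists>\<sigma>\<in>dcl F. length \<sigma> = x" using \<open>x \<le> Max Z\<close> len unfolding dcl_def
      by (intro bexI[of _ "take x f"]) (auto intro: take_is_prefix)
  qed
  have eq: "{\<tau>\<in>dcl F. length \<tau> = z' \<and> prefix (take z f) \<tau>} = take z' ` {g\<in>F. take z g = take z f}"
    if "z \<in> Z" "z' \<in> Z" "z < z'" "f \<in> F" for z z' f
  proof
    have zle: "z' \<le> Max Z" using that fZ by simp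
    have lf: "length (take z f) = z" using that zle len by auto
    show "{\<tau>\<in>dcl F. length \<tau> = z' \<and> prefix (take z f) \<tau>} \<subseteq> take z' ` {g\<in>F. take z g = take z f}"
    proof
      fix \<tau> assume \<tau>: "\<tau> \<in> {\<tau>\<in>dcl F. length \<tau> = z' \<and> prefix (take z f) \<tau>}"
      have "\<tau> \<in> dcl F" "length \<tau> = z'" "prefix (take z f) \<tau>" using \<tau> by auto
      then obtain g where g: "g \<in> F" "\<tau> = take z' g" using dcl_take by metis
      have "take z \<tau> = take z f" using prefix_take_eq[of "take z f" \<tau>] lf \<open>prefix (take z f) \<tau>\<close> by simp
      then have "take z g = take z f" using g \<open>z<z'\<close> by simp
      then show "\<tau> \<in> take z' ` {g\<in>F. take z g = take z f}" using g by auto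
    qed
    show "take z' ` {g\<in>F. take z g = take z f} \<subseteq> {\<tau>\<in>dcl F. length \<tau> = z' \<and> prefix (take z f) \<tau>}"
    proof
      fix \<tau> assume "\<tau> \<in> take z' ` {g\<in>F. take z g = take z f}"
      then obtain g where g: "g \<in> F" "take z g = take z f" "\<tau> = take z' g" by auto
      have "\<tau> \<in> dcl F" using g unfolding dcl_def using take_is_prefix by blast
      moreover have "length \<tau> = z'" using g zle len by simp
      moreover have "prefix (take z f) \<tau>" using g \<open>z<z'\<close> take_prefix_mono by (metis less_imp_le)
      ultimately show "\<tau> \<in> {\<tau>\<in>dcl F. length \<tau> = z' \<and> prefix (take z f) \<tau>}" by simp
    qed
  qed
  show ?thesis unfolding quasistrong_def
  proof (intro conjI ballI impI allI)
    fix z z' \<sigma> assume zz: "z \<in> Z" "z' \<in> Z" and c: "z < z' \<and> (\<forall>w\<in>Z. \<not> (z < w \<and> w < z'))"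
      and \<sigma>: "\<sigma> \<in> dcl F" and l: "length \<sigma> = z"
    obtain f where f: "f \<in> F" "\<sigma> = take z f" using dcl_take[OF \<sigma>] l by auto
    show "\<exists>\<tau>1 \<tau>2. {\<tau> \<in> dcl F. length \<tau> = z' \<and> prefix \<sigma> \<tau>} = {\<tau>1, \<tau>2} \<and> \<not> prefix \<tau>1 \<tau>2 \<and> \<not> prefix \<tau>2 \<tau>1"
    proof -
      have zlt: "z < z'" using c by simp
      have "\<exists>a b. take z' ` {g\<in>F. take z g = take z f} = {a,b} \<and> \<not> prefix a b \<and> \<not> prefix b a"
        using br zz c f(1) by blast
      then show ?thesis using eq[OF zz zlt f(1)] f(2) by simp
    qed
  next
    fix x assume "x \<in> Z" then show "\<exists>\<sigma>\<in>dcl F. length \<sigma> = x" using lev by blast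
  qed (use fZ fin tree in simp_all)
qed

lemma qs_restrict: assumes "qs Z F" "f0 \<in> F"
  shows "qs Z {f\<in>F. take (Min Z) f = take (Min Z) f0}"
proof -
  let ?F = "{f\<in>F. take (Min Z) f = take (Min Z) f0}"
  have fZ: "finite Z" "Z \<noteq> {}" using assms unfolding qs_def by auto
  have eq: "{g\<in>?F. take z g = take z f} = {g\<in>F. take z g = take z f}" if "z \<in> Z" "f \<in> ?F" for z f
  proof -
    have "Min Z \<le> z" using that fZ by simp
    then have tt: "take (Min Z) g = take (Min Z) (take z g)" for g by (simp add: min_def)
    show ?thesis
    proof (rule set_eqI, rule iffI)
      fix g assume "g \<in> {g\<in>F. take z g = take z f}"
      then show "g \<in> {g\<in>?F. take z g = take z f}" using that tt[of g] tt[of f] by auto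
    qed auto
  qed
  show ?thesis using assms unfolding qs_def
  proof (intro conjI ballI impI)
    fix z z' f assume zz: "z \<in> Z" "z' \<in> Z" and c: "z < z' \<and> (\<forall>w\<in>Z. \<not> (z < w \<and> w < z'))" and f: "f \<in> ?F"
    show "\<exists>a b. take z' ` {g\<in>?F. take z g = take z f} = {a,b} \<and> \<not> prefix a b \<and> \<not> prefix b a"
      using eq[OF zz(1) f] assms(1) zz c f unfolding qs_def by auto
  qed auto
qed

lemma qs_convex:
  assumes "quasistrong U T" "X \<subseteq> U" "X \<noteq> {}" "\<forall>u\<in>U. Min X \<le> u \<and> u \<le> Max X \<longrightarrow> u \<in> X"
  shows "quasistrong X T"
proof -
  have fX: "finite X" using assms(1,2) unfolding quasistrong_def using finite_subset by blast
  have cons: "\<forall>w\<in>U. \<not> (x < w \<and> w < x')" if "x \<in> X" "x' \<in> X" "\<forall>w\<in>X. \<not> (x < w \<and> w < x')" for x x'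
  proof (intro ballI notI)
    fix w assume "w \<in> U" "x < w \<and> w < x'"
    moreover have "Min X \<le> x" "x' \<le> Max X" using that fX by auto
    ultimately have "w \<in> X" using assms(4) by auto
    then show False using that \<open>x < w \<and> w < x'\<close> by auto
  qed
  have U: "finite T" "is_tree T" "\<forall>x\<in>U. \<exists>\<sigma>\<in>T. length \<sigma> = x"
    "\<forall>x\<in>U. \<forall>x'\<in>U. x < x' \<and> (\<forall>z\<in>U. \<not> (x < z \<and> z < x')) \<longrightarrow>
        (\<forall>\<sigma>\<in>T. length \<sigma> = x \<longrightarrow>
           (\<exists>\<tau>1 \<tau>2. {\<tau>\<in>T. length \<tau> = x' \<and> prefix \<sigma> \<tau>} = {\<tau>1, \<tau>2} \<and>
                     \<not> prefix \<tau>1 \<tau>2 \<and> \<not> prefix \<tau>2 \<tau>1))"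
    using assms(1) unfolding quasistrong_def by blast+
  show ?thesis unfolding quasistrong_def
  proof (intro conjI ballI impI allI)
    fix x x' \<sigma> assume xx: "x \<in> X" "x' \<in> X" and c: "x < x' \<and> (\<forall>z\<in>X. \<not> (x < z \<and> z < x'))"
      and "\<sigma> \<in> T" "length \<sigma> = x"
    have "x \<in> U" "x' \<in> U" using xx assms(2) by auto
    then show "\<exists>\<tau>1 \<tau>2. {\<tau>\<in>T. length \<tau> = x' \<and> prefix \<sigma> \<tau>} = {\<tau>1, \<tau>2} \<and> \<not> prefix \<tau>1 \<tau>2 \<and> \<not> prefix \<tau>2 \<tau>1"
      using U(4) cons[OF xx] c \<open>\<sigma> \<in> T\<close> \<open>length \<sigma> = x\<close> by blast
  next
    fix x assume "x \<in> X" then show "\<exists>\<sigma>\<in>T. length \<sigma> = x" using U(3) assms(2) by blast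
  qed (use fX assms(3) U in auto)
qed

definition sub :: "bool list set \<Rightarrow> bool list \<Rightarrow> bool list set" where
  "sub T \<pi> = {\<tau>\<in>T. prefix \<tau> \<pi> \<or> prefix \<pi> \<tau>}"

lemma qs_sub:
  assumes "quasistrong B T" "\<pi> \<in> T" "length \<pi> < Min B" "\<forall>b\<in>B. \<exists>\<tau>\<in>T. length \<tau> = b \<and> prefix \<pi> \<tau>"
  shows "quasistrong B (sub T \<pi>)"
proof -
  have fB: "finite B" "B \<noteq> {}" and fT: "finite T" and tr: "is_tree T"
    using assms unfolding quasistrong_def by auto
  have tree: "is_tree (sub T \<pi>)" unfolding is_tree_def sub_def
    using tr unfolding is_tree_def using prefix_order.trans prefix_same_cases by blast
  have up: "prefix \<pi> \<sigma>" if "\<sigma> \<in> sub T \<pi>" "length \<sigma> \<in> B" for \<sigma>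
  proof -
    have "length \<pi> < length \<sigma>" using that assms(3) fB by (meson Min_le less_le_trans)
    then show ?thesis using that unfolding sub_def using prefix_length_le by fastforce
  qed
  have eq: "{\<tau>\<in>sub T \<pi>. length \<tau> = x' \<and> prefix \<sigma> \<tau>} = {\<tau>\<in>T. length \<tau> = x' \<and> prefix \<sigma> \<tau>}"
    if "\<sigma> \<in> sub T \<pi>" "length \<sigma> \<in> B" for \<sigma> x'
    using up[OF that] that unfolding sub_def using prefix_order.trans by blast
  show ?thesis unfolding quasistrong_def
  proof (intro conjI ballI impI allI)
    fix x x' \<sigma> assume xx: "x \<in> B" "x' \<in> B" and c: "x < x' \<and> (\<forall>z\<in>B. \<not> (x < z \<and> z < x'))"
      and \<sigma>: "\<sigma> \<in> sub T \<pi>" and l: "length \<sigma> = x"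
    have "\<sigma> \<in> T" using \<sigma> unfolding sub_def by auto
    then show "\<exists>\<tau>1 \<tau>2. {\<tau> \<in> sub T \<pi>. length \<tau> = x' \<and> prefix \<sigma> \<tau>} = {\<tau>1, \<tau>2} \<and> \<not> prefix \<tau>1 \<tau>2 \<and> \<not> prefix \<tau>2 \<tau>1"
      using eq[OF \<sigma>] l xx c assms(1) unfolding quasistrong_def by auto
  next
    show "finite (sub T \<pi>)" using fT unfolding sub_def by auto
  next
    fix x assume "x \<in> B" then show "\<exists>\<sigma>\<in>sub T \<pi>. length \<sigma> = x" using assms(4) unfolding sub_def by blast
  qed (use fB tree in auto)
qed


definition Pp :: "nat \<Rightarrow> nat set \<Rightarrow> nat set \<Rightarrow> bool" where
 "Pp k X Y \<longleftrightarrow> (\<forall>T (C :: bool list \<Rightarrow> nat). quasistrong X T \<and> (\<forall>\<sigma>\<in>T. length \<sigma> = Max X \<longrightarrow> C \<sigma> < k) \<longrightarrow>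
    (\<exists>c<k. \<exists>S. S \<subseteq> T \<and> quasistrong Y S \<and> (\<forall>\<rho>\<in>leaves S. \<exists>\<tau>\<in>T. length \<tau> = Max X \<and> prefix \<rho> \<tau> \<and> C \<tau> = c)))"

lemma persistent_Suc: "persistent d m k (Suc i) X \<longleftrightarrow> finite X \<and> X \<noteq> {} \<and> (\<exists>Y. Y \<subseteq> X \<and> persistent d m k i Y \<and> Pp k X Y)"
  by (simp add: Pp_def)

lemma Pp_use:
  assumes "Pp k X Y" "quasistrong X T" "\<forall>\<sigma>\<in>T. length \<sigma> = Max X \<longrightarrow> C \<sigma> < k"
  shows "\<exists>c<k. \<exists>S. S \<subseteq> T \<and> quasistrong Y S \<and> (\<forall>\<rho>\<in>S. \<exists>\<tau>\<in>T. length \<tau> = Max X \<and> prefix \<rho> \<tau> \<and> C \<tau> = c)"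
proof -
  have H: "\<forall>T (C :: bool list \<Rightarrow> nat). quasistrong X T \<and> (\<forall>\<sigma>\<in>T. length \<sigma> = Max X \<longrightarrow> C \<sigma> < k) \<longrightarrow>
    (\<exists>c<k. \<exists>S. S \<subseteq> T \<and> quasistrong Y S \<and> (\<forall>\<rho>\<in>leaves S. \<exists>\<tau>\<in>T. length \<tau> = Max X \<and> prefix \<rho> \<tau> \<and> C \<tau> = c))"
    using assms(1) unfolding Pp_def .
  have "\<exists>c<k. \<exists>S. S \<subseteq> T \<and> quasistrong Y S \<and> (\<forall>\<rho>\<in>leaves S. \<exists>\<tau>\<in>T. length \<tau> = Max X \<and> prefix \<rho> \<tau> \<and> C \<tau> = c)"
    using H[rule_format, of T C] assms(2,3) by simp
  then obtain c S where c: "c < k" "S \<subseteq> T" "quasistrong Y S" "\<forall>\<rho>\<in>leaves S. \<exists>\<tau>\<in>T. length \<tau> = Max X \<and> prefix \<rho> \<tau> \<and> C \<tau> = c"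
    by blast
  have "finite S" using c(3) unfolding quasistrong_def by auto
  have "\<exists>\<tau>\<in>T. length \<tau> = Max X \<and> prefix \<rho> \<tau> \<and> C \<tau> = c" if \<rho>S: "\<rho> \<in> S" for \<rho>
  proof -
    obtain l where l: "l \<in> leaves S" "prefix \<rho> l" using leaf_above[OF \<open>finite S\<close> \<rho>S] by blast
    then obtain \<tau> where "\<tau>\<in>T" "length \<tau> = Max X" "prefix l \<tau>" "C \<tau> = c" using c(4) by blast
    then show ?thesis using l(2) prefix_order.trans by blast
  qed
  then show ?thesis using c(1,2,3) by blast
qed

lemma qs_sub2:
  assumes "quasistrong U T" "quasistrong B T" "B \<subseteq> U" "\<pi> \<in> T" "length \<pi> \<in> U" "length \<pi> < Min B"
  shows "quasistrong B (sub T \<pi>)"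
proof (rule qs_sub[OF assms(2,4,6)], intro ballI)
  fix b assume "b \<in> B"
  then have "length \<pi> \<le> b" using assms(2,6) unfolding quasistrong_def by (meson Min_le less_imp_le order.trans)
  then show "\<exists>\<tau>\<in>T. length \<tau> = b \<and> prefix \<pi> \<tau>" using qs_up[OF assms(1,4,5)] \<open>b \<in> B\<close> assms(3) by blast
qed

lemma sub_subset: "sub T \<pi> \<subseteq> T" unfolding sub_def by auto

lemma step1:
  assumes qT: "quasistrong U T" and Cb: "\<forall>\<sigma>\<in>T. length \<sigma> = Max U \<longrightarrow> C \<sigma> < k" and qB: "quasistrong B T"
    and BU: "B \<subseteq> U" and MU: "Max U = Max B" and "length \<rho> \<in> U" and lt: "length \<rho> < Min B"
    and YB: "YB \<subseteq> B" "YB \<noteq> {}" and PB: "Pp k B YB" and \<rho>: "\<rho> \<in> T"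
  shows "\<exists>c F. c < k \<and> F \<subseteq> T \<and> qs YB F \<and> (\<forall>f\<in>F. \<forall>g\<in>F. take (Min YB) f = take (Min YB) g)
     \<and> (\<forall>f\<in>F. prefix \<rho> f) \<and> (\<forall>f\<in>F. \<exists>\<tau>\<in>T. length \<tau> = Max B \<and> prefix f \<tau> \<and> C \<tau> = c)"
proof -
  have fB: "finite B" using qB unfolding quasistrong_def by auto
  have q: "quasistrong B (sub T \<rho>)" using qs_sub2[OF qT qB BU \<rho> assms(6) lt] .
  have cb: "\<forall>\<sigma>\<in>sub T \<rho>. length \<sigma> = Max B \<longrightarrow> C \<sigma> < k"
  proof (intro ballI impI)
    fix \<sigma> assume "\<sigma> \<in> sub T \<rho>" "length \<sigma> = Max B"
    then have "\<sigma> \<in> T" "length \<sigma> = Max U" using MU sub_subset by auto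
    then show "C \<sigma> < k" using Cb by blast
  qed
  obtain c S where cS: "c < k" "S \<subseteq> sub T \<rho>" "quasistrong YB S"
    "\<forall>\<rho>'\<in>S. \<exists>\<tau>\<in>sub T \<rho>. length \<tau> = Max B \<and> prefix \<rho>' \<tau> \<and> C \<tau> = c"
    using Pp_use[OF PB q cb] by blast
  let ?F' = "{\<sigma>\<in>S. length \<sigma> = Max YB}"
  have q': "qs YB ?F'" using quasistrong_qs[OF cS(3)] .
  then obtain f0 where f0: "f0 \<in> ?F'" using qs_ne by blast
  let ?F = "{f\<in>?F'. take (Min YB) f = take (Min YB) f0}"
  have qF: "qs YB ?F" using qs_restrict[OF q' f0] .
  have FT: "?F \<subseteq> T" using cS(2) sub_subset by blast
  have fYB: "finite YB" using fB YB finite_subset by blast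
  have "Max YB \<in> YB" using YB fYB by simp
  then have "Max YB \<in> B" using YB by blast
  then have "Min B \<le> Max YB" using fB by simp
  then have pre: "prefix \<rho> f" if "f \<in> ?F" for f
  proof -
    have "f \<in> sub T \<rho>" "length f = Max YB" using that cS(2) by auto
    moreover have "length \<rho> < length f" using \<open>Min B \<le> Max YB\<close> lt calculation by simp
    moreover have "prefix \<rho> f \<or> prefix f \<rho>" using calculation(1) unfolding sub_def by blast
    ultimately show ?thesis using prefix_length_le by (metis leD)
  qed
  have col: "\<exists>\<tau>\<in>T. length \<tau> = Max B \<and> prefix f \<tau> \<and> C \<tau> = c" if "f \<in> ?F" for f
    using cS(4) that sub_subset by blast
  have root: "\<forall>f\<in>?F. \<forall>g\<in>?F. take (Min YB) f = take (Min YB) g" by simp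
  have A: "\<forall>f\<in>?F. prefix \<rho> f" using pre by blast
  have B: "\<forall>f\<in>?F. \<exists>\<tau>\<in>T. length \<tau> = Max B \<and> prefix f \<tau> \<and> C \<tau> = c" using col by blast
  show ?thesis
    by (rule exI[of _ c], rule exI[of _ ?F], intro conjI cS(1) FT qF root A B)
qed

lemma step2:
  assumes qU: "quasistrong U T" and qG: "quasistrong G T" and GU: "G \<subseteq> U"
    and \<pi>: "\<pi> \<in> T" "length \<pi> \<in> U" "length \<pi> < Min G"
    and cb: "\<forall>\<rho>\<in>T. length \<rho> = Max G \<longrightarrow> cB \<rho> < k"
    and YG: "YG \<subseteq> G" "2 \<le> card YG" and PG: "Pp k G YG"
  shows "\<exists>c \<rho>1 \<rho>2. c < k \<and> \<rho>1 \<in> T \<and> \<rho>2 \<in> T \<and> length \<rho>1 = Max G \<and> length \<rho>2 = Max G \<and>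
     prefix \<pi> \<rho>1 \<and> prefix \<pi> \<rho>2 \<and> \<rho>1 \<noteq> \<rho>2 \<and> cB \<rho>1 = c \<and> cB \<rho>2 = c"
proof -
  have fG: "finite G" "G \<noteq> {}" using qG unfolding quasistrong_def by auto
  have q: "quasistrong G (sub T \<pi>)" using qs_sub2[OF qU qG GU \<pi>] .
  have cb': "\<forall>\<sigma>\<in>sub T \<pi>. length \<sigma> = Max G \<longrightarrow> cB \<sigma> < k" using cb sub_subset by blast
  obtain c S where cS: "c < k" "S \<subseteq> sub T \<pi>" "quasistrong YG S"
    "\<forall>\<rho>'\<in>S. \<exists>\<tau>\<in>sub T \<pi>. length \<tau> = Max G \<and> prefix \<rho>' \<tau> \<and> cB \<tau> = c"
    using Pp_use[OF PG q cb'] by blast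
  have fYG: "finite YG" using fG YG finite_subset by blast
  define g0 where "g0 = Min YG"
  have ne: "YG \<noteq> {}" using YG by auto
  have g0: "g0 \<in> YG" unfolding g0_def using fYG ne by simp
  have ne1: "YG - {g0} \<noteq> {}"
  proof
    assume "YG - {g0} = {}"
    then have "YG = {g0}" using g0 by auto
    then show False using YG by simp
  qed
  define g1 where "g1 = Min (YG - {g0})"
  have g1: "g1 \<in> YG" "g1 \<noteq> g0" unfolding g1_def using fYG ne1 Min_in[of "YG - {g0}"] by auto
  have "g0 \<le> g1" using g1 fYG unfolding g0_def by simp
  then have lt: "g0 < g1" using g1 by simp
  have cons: "\<forall>w\<in>YG. \<not> (g0 < w \<and> w < g1)"
  proof (intro ballI notI)
    fix w assume "w \<in> YG" "g0 < w \<and> w < g1"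
    then have "w \<in> YG - {g0}" by auto
    then have "g1 \<le> w" unfolding g1_def using fYG by simp
    then show False using \<open>g0 < w \<and> w < g1\<close> by simp
  qed
  obtain \<sigma> where \<sigma>: "\<sigma> \<in> S" "length \<sigma> = g0" using cS(3) g0 unfolding quasistrong_def by blast
  obtain a b where ab: "{\<tau>\<in>S. length \<tau> = g1 \<and> prefix \<sigma> \<tau>} = {a,b}" "\<not> prefix a b" "\<not> prefix b a"
    using cS(3) g0 g1(1) lt cons \<sigma> unfolding quasistrong_def by blast
  have "a \<in> S" "b \<in> S" using ab(1) by auto
  obtain \<rho>1 where r1: "\<rho>1 \<in> sub T \<pi>" "length \<rho>1 = Max G" "prefix a \<rho>1" "cB \<rho>1 = c"
    using cS(4) \<open>a \<in> S\<close> by blast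
  obtain \<rho>2 where r2: "\<rho>2 \<in> sub T \<pi>" "length \<rho>2 = Max G" "prefix b \<rho>2" "cB \<rho>2 = c"
    using cS(4) \<open>b \<in> S\<close> by blast
  have ne12: "\<rho>1 \<noteq> \<rho>2"
  proof
    assume "\<rho>1 = \<rho>2"
    then have "prefix a \<rho>1" "prefix b \<rho>1" using r1 r2 by auto
    then have "prefix a b \<or> prefix b a" by (rule prefix_same_cases)
    then show False using ab by blast
  qed
  have "Min G \<le> Max G" using fG by simp
  have pre: "prefix \<pi> \<rho>" if \<rho>: "\<rho> \<in> sub T \<pi>" "length \<rho> = Max G" for \<rho>
  proof -
    have "prefix \<rho> \<pi> \<or> prefix \<pi> \<rho>" using \<rho>(1) unfolding sub_def by blast
    moreover have "\<not> prefix \<rho> \<pi>"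
    proof
      assume "prefix \<rho> \<pi>"
      then have "length \<rho> \<le> length \<pi>" by (rule prefix_length_le)
      then show False using \<rho>(2) \<pi>(3) \<open>Min G \<le> Max G\<close> by simp
    qed
    ultimately show ?thesis by blast
  qed
  have T1: "\<rho>1 \<in> T" "\<rho>2 \<in> T" using r1(1) r2(1) sub_subset by blast+
  show ?thesis
    by (rule exI[of _ c], rule exI[of _ \<rho>1], rule exI[of _ \<rho>2],
        intro conjI cS(1) T1 r1(2) r2(2) pre[OF r1(1,2)] pre[OF r2(1,2)] ne12 r1(4) r2(4))
qed

lemma proj_image:
  assumes "\<forall>g\<in>F. take N g \<in> F0" "\<forall>\<mu>\<in>F0. \<exists>g\<in>F. take N g = \<mu>" "z \<le> N" "z' \<le> N"
  shows "take z' ` {g\<in>F. take z g = take z f} = take z' ` {\<mu>\<in>F0. take z \<mu> = take z (take N f)}"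
proof -
  have t1: "min z N = z" using assms(3) by simp
  have t2: "min z' N = z'" using assms(4) by simp
  show ?thesis
  proof
    show "take z' ` {g\<in>F. take z g = take z f} \<subseteq> take z' ` {\<mu>\<in>F0. take z \<mu> = take z (take N f)}"
    proof
      fix x assume "x \<in> take z' ` {g\<in>F. take z g = take z f}"
      then obtain g where g: "g \<in> F" "take z g = take z f" "x = take z' g" by auto
      then show "x \<in> take z' ` {\<mu>\<in>F0. take z \<mu> = take z (take N f)}"
        using assms(1) t1 t2 by (intro image_eqI[of _ _ "take N g"]) auto
    qed
    show "take z' ` {\<mu>\<in>F0. take z \<mu> = take z (take N f)} \<subseteq> take z' ` {g\<in>F. take z g = take z f}"
    proof
      fix x assume "x \<in> take z' ` {\<mu>\<in>F0. take z \<mu> = take z (take N f)}"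
      then obtain \<mu> where \<mu>: "\<mu> \<in> F0" "take z \<mu> = take z (take N f)" "x = take z' \<mu>" by auto
      then obtain g where "g \<in> F" "take N g = \<mu>" using assms(2) by blast
      then show "x \<in> take z' ` {g\<in>F. take z g = take z f}"
        using \<mu> t1 t2 by (intro image_eqI[of _ _ g]) auto
    qed
  qed
qed

lemma glue:
  fixes X G B Y YG YB :: "nat set"
  assumes fin: "finite X" "finite G" "finite B" and ne: "X \<noteq> {}" "G \<noteq> {}" "B \<noteq> {}"
    and XG: "\<forall>x\<in>X. \<forall>g\<in>G. x < g" and GB: "\<forall>g\<in>G. \<forall>b\<in>B. g < b"
    and Y: "Y \<subseteq> X" "Y \<noteq> {}" and YG: "YG \<subseteq> G" "2 \<le> card YG" and YB: "YB \<subseteq> B" "YB \<noteq> {}"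
    and PX: "Pp k X Y" and PG: "Pp k G YG" and PB: "Pp k B YB"
  shows "Pp k (X \<union> G \<union> B) (Y \<union> YB)"
  unfolding Pp_def
proof (intro allI impI)
  fix T and C :: "bool list \<Rightarrow> nat"
  let ?U = "X \<union> G \<union> B"
  assume "quasistrong ?U T \<and> (\<forall>\<sigma>\<in>T. length \<sigma> = Max ?U \<longrightarrow> C \<sigma> < k)"
  then have qT: "quasistrong ?U T" and Cb: "\<forall>\<sigma>\<in>T. length \<sigma> = Max ?U \<longrightarrow> C \<sigma> < k" by auto
  have fY: "finite Y" "finite YB" using fin Y YB finite_subset by blast+
  have XB: "\<forall>x\<in>X. \<forall>b\<in>B. x < b" using XG GB ne(2) by (meson all_not_in_conv order.strict_trans)
  have MX: "Max X \<in> X" and MG: "Max G \<in> G" "Min G \<in> G" and MB: "Max B \<in> B" "Min B \<in> B"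
    using fin ne by auto
  have MU: "Max ?U = Max B"
  proof (rule Max_eqI)
    fix u assume "u \<in> ?U"
    then show "u \<le> Max B" using XB GB MB fin by fastforce
  qed (use fin MB in auto)
  have XGl: "Max X < Min G" and GBl: "Max G < Min B" using XG GB MX MG MB by auto
  have cvB: "\<forall>u\<in>?U. Min B \<le> u \<and> u \<le> Max B \<longrightarrow> u \<in> B"
    by (metis UnE XB GB MB(2) leD)
  have cvG: "\<forall>u\<in>?U. Min G \<le> u \<and> u \<le> Max G \<longrightarrow> u \<in> G"
    by (metis UnE XG GB MG(1) MG(2) leD)
  have cvX: "\<forall>u\<in>?U. Min X \<le> u \<and> u \<le> Max X \<longrightarrow> u \<in> X"
    by (metis UnE XG XB MX leD)
  have qB: "quasistrong B T" using qs_convex[OF qT _ ne(3) cvB] by blast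
  have qG: "quasistrong G T" using qs_convex[OF qT _ ne(2) cvG] by blast
  have qX: "quasistrong X T" using qs_convex[OF qT _ ne(1) cvX] by blast
  define Q1 where "Q1 \<rho> c F \<longleftrightarrow> c < k \<and> F \<subseteq> T \<and> qs YB F \<and> (\<forall>f\<in>F. \<forall>g\<in>F. take (Min YB) f = take (Min YB) g)
     \<and> (\<forall>f\<in>F. prefix \<rho> f) \<and> (\<forall>f\<in>F. \<exists>\<tau>\<in>T. length \<tau> = Max B \<and> prefix f \<tau> \<and> C \<tau> = c)" for \<rho> c F
  have S1: "\<forall>\<rho>\<in>{\<rho>\<in>T. length \<rho> = Max G}. \<exists>c F. Q1 \<rho> c F"
  proof
    fix \<rho> assume \<rho>: "\<rho> \<in> {\<rho>\<in>T. length \<rho> = Max G}"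
    then have l1: "length \<rho> \<in> ?U" "length \<rho> < Min B" and "\<rho> \<in> T" using MG GBl by auto
    show "\<exists>c F. Q1 \<rho> c F" unfolding Q1_def
      using step1[OF qT Cb qB Un_upper2 MU l1 YB PB \<open>\<rho> \<in> T\<close>] .
  qed
  from bchoice[OF S1] obtain cB where h1: "\<forall>\<rho>\<in>{\<rho>\<in>T. length \<rho> = Max G}. \<exists>F. Q1 \<rho> (cB \<rho>) F" by blast
  from bchoice[OF h1] obtain FB where h2: "\<forall>\<rho>\<in>{\<rho>\<in>T. length \<rho> = Max G}. Q1 \<rho> (cB \<rho>) (FB \<rho>)" by blast
  have cbB: "\<forall>\<rho>\<in>T. length \<rho> = Max G \<longrightarrow> cB \<rho> < k" using h2 unfolding Q1_def by blast
  define Q2 where "Q2 \<pi> c \<rho>1 \<rho>2 \<longleftrightarrow> c < k \<and> \<rho>1 \<in> T \<and> \<rho>2 \<in> T \<and> length \<rho>1 = Max G \<and> length \<rho>2 = Max G \<and>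
     prefix \<pi> \<rho>1 \<and> prefix \<pi> \<rho>2 \<and> \<rho>1 \<noteq> \<rho>2 \<and> cB \<rho>1 = c \<and> cB \<rho>2 = c" for \<pi> c \<rho>1 \<rho>2
  have S2: "\<forall>\<pi>\<in>{\<pi>\<in>T. length \<pi> = Max X}. \<exists>c \<rho>1 \<rho>2. Q2 \<pi> c \<rho>1 \<rho>2"
  proof
    fix \<pi> assume \<pi>: "\<pi> \<in> {\<pi>\<in>T. length \<pi> = Max X}"
    then have l1: "\<pi> \<in> T" "length \<pi> \<in> ?U" "length \<pi> < Min G" using MX XGl by auto
    have GU: "G \<subseteq> ?U" by blast
    show "\<exists>c \<rho>1 \<rho>2. Q2 \<pi> c \<rho>1 \<rho>2" unfolding Q2_def
      using step2[OF qT qG GU l1 cbB YG PG] .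
  qed
  from bchoice[OF S2] obtain cG where h3: "\<forall>\<pi>\<in>{\<pi>\<in>T. length \<pi> = Max X}. \<exists>\<rho>1 \<rho>2. Q2 \<pi> (cG \<pi>) \<rho>1 \<rho>2" by blast
  from bchoice[OF h3] obtain r1 where h4: "\<forall>\<pi>\<in>{\<pi>\<in>T. length \<pi> = Max X}. \<exists>\<rho>2. Q2 \<pi> (cG \<pi>) (r1 \<pi>) \<rho>2" by blast
  from bchoice[OF h4] obtain r2 where h5: "\<forall>\<pi>\<in>{\<pi>\<in>T. length \<pi> = Max X}. Q2 \<pi> (cG \<pi>) (r1 \<pi>) (r2 \<pi>)" by blast
  have cbG: "\<forall>\<pi>\<in>T. length \<pi> = Max X \<longrightarrow> cG \<pi> < k" using h5 unfolding Q2_def by blast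
  obtain c S0 where cS: "c < k" "S0 \<subseteq> T" "quasistrong Y S0"
    "\<forall>\<rho>'\<in>S0. \<exists>\<tau>\<in>T. length \<tau> = Max X \<and> prefix \<rho>' \<tau> \<and> cG \<tau> = c"
    using Pp_use[OF PX qX cbG] by blast
  define F0 where "F0 = {\<sigma>\<in>S0. length \<sigma> = Max Y}"
  have qF0: "qs Y F0" unfolding F0_def using quasistrong_qs[OF cS(3)] .
  have "\<forall>\<xi>\<in>F0. \<exists>\<pi>. \<pi> \<in> T \<and> length \<pi> = Max X \<and> prefix \<xi> \<pi> \<and> cG \<pi> = c"
    using cS(4) unfolding F0_def by blast
  from bchoice[OF this] obtain pf where pf: "\<forall>\<xi>\<in>F0. pf \<xi> \<in> T \<and> length (pf \<xi>) = Max X \<and> prefix \<xi> (pf \<xi>) \<and> cG (pf \<xi>) = c"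
    by blast
  define F where "F = (\<Union>\<xi>\<in>F0. FB (r1 (pf \<xi>)) \<union> FB (r2 (pf \<xi>)))"
  define good where "good \<xi> \<rho> \<longleftrightarrow> \<xi> \<in> F0 \<and> (\<rho> = r1 (pf \<xi>) \<or> \<rho> = r2 (pf \<xi>))" for \<xi> \<rho>
  have inF: "g \<in> F \<longleftrightarrow> (\<exists>\<xi> \<rho>. good \<xi> \<rho> \<and> g \<in> FB \<rho>)" for g
    unfolding F_def good_def by blast
  have F0S: "F0 \<subseteq> S0" and F0len: "\<forall>\<xi>\<in>F0. length \<xi> = Max Y" unfolding F0_def by auto
  have K: "Q2 (pf \<xi>) c (r1 (pf \<xi>)) (r2 (pf \<xi>))" if "\<xi> \<in> F0" for \<xi>
  proof -
    have "pf \<xi> \<in> {\<pi>\<in>T. length \<pi> = Max X}" using pf that by blast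
    then have "Q2 (pf \<xi>) (cG (pf \<xi>)) (r1 (pf \<xi>)) (r2 (pf \<xi>))" using h5 by blast
    then show ?thesis using pf that by simp
  qed
  have Kr: "\<rho> \<in> T \<and> length \<rho> = Max G \<and> prefix \<xi> \<rho> \<and> cB \<rho> = c \<and> Q1 \<rho> c (FB \<rho>)" if "good \<xi> \<rho>" for \<xi> \<rho>
  proof -
    have \<xi>: "\<xi> \<in> F0" using that unfolding good_def by blast
    have q2: "Q2 (pf \<xi>) c (r1 (pf \<xi>)) (r2 (pf \<xi>))" using K[OF \<xi>] .
    have a: "\<rho> \<in> T" "length \<rho> = Max G" "prefix (pf \<xi>) \<rho>" "cB \<rho> = c"
      using q2 that unfolding Q2_def good_def by auto
    have "prefix \<xi> (pf \<xi>)" using pf \<xi> by blast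
    then have "prefix \<xi> \<rho>" using a(3) prefix_order.trans by blast
    moreover have "Q1 \<rho> (cB \<rho>) (FB \<rho>)" using h2 a(1,2) by blast
    ultimately show ?thesis using a by simp
  qed
  have Kg: "length g = Max YB \<and> take (Max Y) g = \<xi> \<and> take (Max G) g = \<rho> \<and> g \<in> T \<and> prefix \<rho> g"
    if "good \<xi> \<rho>" "g \<in> FB \<rho>" for \<xi> \<rho> g
  proof -
    have k: "\<rho> \<in> T" "length \<rho> = Max G" "prefix \<xi> \<rho>" "Q1 \<rho> c (FB \<rho>)" using Kr[OF that(1)] by auto
    have q: "qs YB (FB \<rho>)" "FB \<rho> \<subseteq> T" "prefix \<rho> g" using k(4) that(2) unfolding Q1_def by auto
    have "length \<xi> = Max Y" using F0len that(1) unfolding good_def by blast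
    moreover have "prefix \<xi> g" using k(3) q(3) prefix_order.trans by blast
    ultimately have "take (Max Y) g = \<xi>" using prefix_take_eq[of \<xi> g] by simp
    moreover have "take (Max G) g = \<rho>" using prefix_take_eq[OF q(3)] k(2) by simp
    ultimately show ?thesis using qs_len[OF q(1) that(2)] q that(2) by blast
  qed
  have Q1g: "Q1 \<rho> c (FB \<rho>)" if "good \<xi> \<rho>" for \<xi> \<rho> using Kr[OF that] by blast
  have qFB: "qs YB (FB \<rho>)" if "good \<xi> \<rho>" for \<xi> \<rho>
    using Q1g[OF that] unfolding Q1_def by blast
  have rootFB: "\<forall>f\<in>FB \<rho>. \<forall>g\<in>FB \<rho>. take (Min YB) f = take (Min YB) g" if "good \<xi> \<rho>" for \<xi> \<rho>
    using Q1g[OF that] unfolding Q1_def by blast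
  have colFB: "\<forall>f\<in>FB \<rho>. \<exists>\<tau>\<in>T. length \<tau> = Max B \<and> prefix f \<tau> \<and> C \<tau> = c" if "good \<xi> \<rho>" for \<xi> \<rho>
    using Q1g[OF that] unfolding Q1_def by blast
  have F0ne: "F0 \<noteq> {}" using qs_ne[OF qF0] .
  have F0fin: "finite F0" using qs_finite[OF qF0] .
  have goodI: "good \<xi> (r1 (pf \<xi>))" "good \<xi> (r2 (pf \<xi>))" if "\<xi> \<in> F0" for \<xi>
    using that unfolding good_def by auto
  have r12: "r1 (pf \<xi>) \<noteq> r2 (pf \<xi>)" if "\<xi> \<in> F0" for \<xi>
    using K[OF that] unfolding Q2_def by blast
  have fY: "finite Y" "finite YB" using fin Y YB finite_subset by blast+
  have MY: "Max Y \<in> Y" "Max YB \<in> YB" "Min YB \<in> YB" using fY Y YB by auto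
  have YltYB: "\<forall>y\<in>Y. \<forall>b\<in>YB. y < b" using XB Y YB by blast
  have MYX: "Max Y \<le> Max X" using MY(1) Y fin by auto
  have MGYB: "Max G < Min YB" using GB MG(1) MY(3) YB by blast
  have YBle: "Min YB \<le> Max YB" using fY MY by simp
  have MZ: "Max (Y \<union> YB) = Max YB"
  proof (rule Max_eqI)
    fix u assume "u \<in> Y \<union> YB"
    then show "u \<le> Max YB"
    proof
      assume "u \<in> Y" then have "u < Max YB" using YltYB MY(2) by blast
      then show ?thesis by simp
    next
      assume "u \<in> YB" then show ?thesis using fY(2) by simp
    qed
  qed (use fY MY in auto)
  have p1: "\<forall>g\<in>F. take (Max Y) g \<in> F0"
  proof
    fix g assume "g \<in> F"
    then obtain \<xi> \<rho> where gg: "good \<xi> \<rho>" "g \<in> FB \<rho>" using inF by blast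
    then have "take (Max Y) g = \<xi>" using Kg by blast
    then show "take (Max Y) g \<in> F0" using gg(1) unfolding good_def by blast
  qed
  have p2: "\<forall>\<mu>\<in>F0. \<exists>g\<in>F. take (Max Y) g = \<mu>"
  proof
    fix \<mu> assume "\<mu> \<in> F0"
    then have g: "good \<mu> (r1 (pf \<mu>))" by (rule goodI)
    then obtain g where "g \<in> FB (r1 (pf \<mu>))" using qs_ne[OF qFB[OF g]] by blast
    then show "\<exists>g\<in>F. take (Max Y) g = \<mu>" using Kg[OF g] inF g by blast
  qed
  have BR: "\<exists>a b. take z' ` {g\<in>F. take z g = take z f} = {a,b} \<and> \<not> prefix a b \<and> \<not> prefix b a"
    if zz: "z \<in> Y \<union> YB" "z' \<in> Y \<union> YB" "z < z'" "\<forall>w\<in>Y \<union> YB. \<not> (z < w \<and> w < z')" and f: "f \<in> F" for z z' f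
  proof -
    obtain \<xi> \<rho> where gf: "good \<xi> \<rho>" "f \<in> FB \<rho>" using f inF by blast
    have tf: "take (Max Y) f = \<xi>" "take (Max G) f = \<rho>" using Kg[OF gf] by auto
    have \<xi>F0: "\<xi> \<in> F0" using gf(1) unfolding good_def by blast
    consider (a) "z \<in> Y" "z' \<in> Y" | (b) "z \<in> Y" "z' \<in> YB" | (c) "z \<in> YB" "z' \<in> YB" | (d) "z \<in> YB" "z' \<in> Y"
      using zz(1,2) by blast
    then show ?thesis
    proof cases
      case a
      have cY: "\<forall>w\<in>Y. \<not> (z < w \<and> w < z')" using zz(4) by blast
      have zle: "z \<le> Max Y" "z' \<le> Max Y" using a fY by auto
      have eq: "take z' ` {g\<in>F. take z g = take z f} = take z' ` {\<mu>\<in>F0. take z \<mu> = take z \<xi>}"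
        using proj_image[OF p1 p2 zle, of f] unfolding tf(1) .
      show ?thesis using qs_br[OF qF0 a(1) a(2) zz(3) cY \<xi>F0] eq by simp
    next
      case b
      have z: "z = Max Y"
      proof (rule ccontr)
        assume "z \<noteq> Max Y"
        then have "z < Max Y" using b fY by (simp add: order.not_eq_order_implies_strict)
        moreover have "Max Y < z'" using YltYB MY(1) b(2) by blast
        ultimately show False using zz(4) MY(1) by blast
      qed
      have z': "z' = Min YB"
      proof (rule ccontr)
        assume "z' \<noteq> Min YB"
        then have "Min YB < z'" using b fY by (simp add: order.not_eq_order_implies_strict)
        moreover have "z < Min YB" using YltYB MY(3) b(1) by blast
        ultimately show False using zz(4) MY(3) by blast
      qed
      define \<rho>1 where "\<rho>1 = r1 (pf \<xi>)"
      define \<rho>2 where "\<rho>2 = r2 (pf \<xi>)"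
      have g1: "good \<xi> \<rho>1" and g2: "good \<xi> \<rho>2" unfolding \<rho>1_def \<rho>2_def using goodI[OF \<xi>F0] by auto
      obtain f1 where f1: "f1 \<in> FB \<rho>1" using qs_ne[OF qFB[OF g1]] by blast
      obtain f2 where f2: "f2 \<in> FB \<rho>2" using qs_ne[OF qFB[OF g2]] by blast
      define \<nu>1 where "\<nu>1 = take (Min YB) f1"
      define \<nu>2 where "\<nu>2 = take (Min YB) f2"
      have set: "take z' ` {g\<in>F. take z g = take z f} = {\<nu>1, \<nu>2}"
      proof
        show "take z' ` {g\<in>F. take z g = take z f} \<subseteq> {\<nu>1, \<nu>2}"
        proof
          fix x assume "x \<in> take z' ` {g\<in>F. take z g = take z f}"
          then obtain g where g: "g \<in> F" "take z g = take z f" "x = take z' g" by blast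
          obtain \<xi>' \<rho>' where gg: "good \<xi>' \<rho>'" "g \<in> FB \<rho>'" using g(1) inF by blast
          have "\<xi>' = \<xi>" using Kg[OF gg] g(2) z tf(1) by simp
          then have "\<rho>' = \<rho>1 \<or> \<rho>' = \<rho>2" using gg(1) unfolding good_def \<rho>1_def \<rho>2_def by blast
          then show "x \<in> {\<nu>1, \<nu>2}"
          proof
            assume "\<rho>' = \<rho>1"
            then have "take (Min YB) g = \<nu>1" using rootFB[OF g1] gg(2) f1 unfolding \<nu>1_def by blast
            then show ?thesis using g(3) z' by simp
          next
            assume "\<rho>' = \<rho>2"
            then have "take (Min YB) g = \<nu>2" using rootFB[OF g2] gg(2) f2 unfolding \<nu>2_def by blast
            then show ?thesis using g(3) z' by simp
          qed
        qed
        have "f1 \<in> F" "f2 \<in> F" using inF g1 g2 f1 f2 by blast+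
        moreover have "take z f1 = take z f" "take z f2 = take z f"
          using Kg[OF g1 f1] Kg[OF g2 f2] z tf(1) by simp_all
        ultimately have i1: "f1 \<in> {g\<in>F. take z g = take z f}" and i2: "f2 \<in> {g\<in>F. take z g = take z f}" by simp_all
        have e1: "\<nu>1 = take z' f1" unfolding \<nu>1_def using z' by simp
        have e2: "\<nu>2 = take z' f2" unfolding \<nu>2_def using z' by simp
        have m1: "\<nu>1 \<in> take z' ` {g\<in>F. take z g = take z f}" unfolding e1 using i1 by (rule imageI)
        have m2: "\<nu>2 \<in> take z' ` {g\<in>F. take z g = take z f}" unfolding e2 using i2 by (rule imageI)
        show "{\<nu>1, \<nu>2} \<subseteq> take z' ` {g\<in>F. take z g = take z f}" using m1 m2 by (simp only: insert_subset empty_subsetI simp_thms)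
      qed
      have mm: "min (Max G) (Min YB) = Max G" using MGYB by simp
      have t1: "take (Max G) \<nu>1 = \<rho>1" unfolding \<nu>1_def using Kg[OF g1 f1] mm by simp
      have t2: "take (Max G) \<nu>2 = \<rho>2" unfolding \<nu>2_def using Kg[OF g2 f2] mm by simp
      have "\<rho>1 \<noteq> \<rho>2" unfolding \<rho>1_def \<rho>2_def using r12[OF \<xi>F0] .
      then have ne: "\<nu>1 \<noteq> \<nu>2" using t1 t2 by auto
      have l: "length \<nu>1 = length \<nu>2" unfolding \<nu>1_def \<nu>2_def using Kg[OF g1 f1] Kg[OF g2 f2] by simp
      have "\<not> prefix \<nu>1 \<nu>2" using ne l prefix_same_len[of \<nu>1 \<nu>2] by auto
      moreover have "\<not> prefix \<nu>2 \<nu>1" using ne l prefix_same_len[of \<nu>2 \<nu>1] by auto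
      ultimately show ?thesis using set by blast
    next
      case c
      have cYB: "\<forall>w\<in>YB. \<not> (z < w \<and> w < z')" using zz(4) by blast
      have "Min YB \<le> z" using c fY by simp
      then have mm: "min (Max G) z = Max G" using MGYB by simp
      have eq: "{g\<in>F. take z g = take z f} = {g\<in>FB \<rho>. take z g = take z f}"
      proof
        show "{g\<in>F. take z g = take z f} \<subseteq> {g\<in>FB \<rho>. take z g = take z f}"
        proof
          fix g assume g: "g \<in> {g\<in>F. take z g = take z f}"
          then obtain \<xi>' \<rho>' where gg: "good \<xi>' \<rho>'" "g \<in> FB \<rho>'" using inF by blast
          have "take (Max G) (take z g) = take (Max G) (take z f)" using g by simp
          then have "take (Max G) g = take (Max G) f" using mm by simp
          then have "\<rho>' = \<rho>" using Kg[OF gg] tf(2) by simp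
          then show "g \<in> {g\<in>FB \<rho>. take z g = take z f}" using g gg by simp
        qed
        show "{g\<in>FB \<rho>. take z g = take z f} \<subseteq> {g\<in>F. take z g = take z f}" using inF gf(1) by blast
      qed
      show ?thesis using qs_br[OF qFB[OF gf(1)] c(1) c(2) zz(3) cYB gf(2)] eq by simp
    next
      case d
      have "z' < z" using YltYB d by blast
      then show ?thesis using zz(3) by simp
    qed
  qed
  have "\<forall>\<xi>\<in>F0. finite (FB (r1 (pf \<xi>)) \<union> FB (r2 (pf \<xi>)))"
  proof
    fix \<xi> assume "\<xi> \<in> F0"
    then show "finite (FB (r1 (pf \<xi>)) \<union> FB (r2 (pf \<xi>)))"
      using qs_finite[OF qFB[OF goodI(1)]] qs_finite[OF qFB[OF goodI(2)]] by blast
  qed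
  then have Ffin: "finite F" unfolding F_def using F0fin by blast
  have Fne: "F \<noteq> {}"
  proof -
    obtain \<xi> where "\<xi> \<in> F0" using F0ne by blast
    then have g: "good \<xi> (r1 (pf \<xi>))" by (rule goodI)
    then obtain g where "g \<in> FB (r1 (pf \<xi>))" using qs_ne[OF qFB[OF g]] by blast
    then show ?thesis using inF g by blast
  qed
  have Flen: "\<forall>f\<in>F. length f = Max (Y \<union> YB)"
  proof
    fix g assume "g \<in> F"
    then obtain \<xi> \<rho> where gg: "good \<xi> \<rho>" "g \<in> FB \<rho>" using inF by blast
    then have "length g = Max YB" using Kg by blast
    then show "length g = Max (Y \<union> YB)" using MZ by simp
  qed
  have qsF: "qs (Y \<union> YB) F" unfolding qs_def
  proof (intro conjI ballI impI)
    fix z z' f assume "z \<in> Y \<union> YB" "z' \<in> Y \<union> YB" "z < z' \<and> (\<forall>w\<in>Y \<union> YB. \<not> (z < w \<and> w < z'))" "f \<in> F"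
    then show "\<exists>a b. take z' ` {g\<in>F. take z g = take z f} = {a,b} \<and> \<not> prefix a b \<and> \<not> prefix b a"
      using BR by blast
  qed (use fY Y(2) Ffin Fne Flen in simp_all)
  have qd: "quasistrong (Y \<union> YB) (dcl F)" using qs_D[OF qsF] .
  have trT: "is_tree T" using qT unfolding quasistrong_def by blast
  have FT: "F \<subseteq> T" using inF Kg by blast
  have subT: "dcl F \<subseteq> T" using FT trT unfolding dcl_def is_tree_def by blast
  have col: "\<forall>\<rho>'\<in>leaves (dcl F). \<exists>\<tau>\<in>T. length \<tau> = Max ?U \<and> prefix \<rho>' \<tau> \<and> C \<tau> = c"
  proof
    fix \<rho>' assume "\<rho>' \<in> leaves (dcl F)"
    then obtain g where g: "g \<in> F" "prefix \<rho>' g" unfolding leaves_def dcl_def by blast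
    then obtain \<xi> \<rho> where gg: "good \<xi> \<rho>" "g \<in> FB \<rho>" using inF by blast
    then obtain \<tau> where "\<tau> \<in> T" "length \<tau> = Max B" "prefix g \<tau>" "C \<tau> = c" using colFB by blast
    moreover have "prefix \<rho>' \<tau>" using g(2) \<open>prefix g \<tau>\<close> prefix_order.trans by blast
    ultimately show "\<exists>\<tau>\<in>T. length \<tau> = Max ?U \<and> prefix \<rho>' \<tau> \<and> C \<tau> = c"
      using MU by auto
  qed
  show "\<exists>c<k. \<exists>S. S \<subseteq> T \<and> quasistrong (Y \<union> YB) S \<and> (\<forall>\<rho>\<in>leaves S. \<exists>\<tau>\<in>T. length \<tau> = Max ?U \<and> prefix \<rho> \<tau> \<and> C \<tau> = c)"
    using cS(1) subT qd col by blast
qed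


lemma pers_ne: assumes "persistent d m k i X" shows "finite X \<and> X \<noteq> {}"
proof (cases i)
  case 0 then show ?thesis using assms by simp
next
  case (Suc i')
  have "persistent d m k (Suc i') X" using assms Suc by simp
  then show ?thesis unfolding persistent_Suc by blast
qed

lemma pers_large: "persistent d m k i X \<Longrightarrow> \<exists>Z\<subseteq>X. omega_mult_large d m Z"
proof (induction i arbitrary: X)
  case 0
  then have "omega_mult_large d m X" by simp
  then show ?case by blast
next
  case (Suc i)
  from Suc.prems obtain Y where Y: "Y \<subseteq> X" "persistent d m k i Y" unfolding persistent_Suc by blast
  obtain Z where "Z \<subseteq> Y" "omega_mult_large d m Z" using Suc.IH[OF Y(2)] by blast
  then show ?case using Y(1) by blast
qed

lemma stack_lt:
  assumes "is_stack Xs" "l < l'" "l' < length Xs" "x \<in> Xs ! l" "y \<in> Xs ! l'"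
  shows "x < y"
  using assms(2-5)
proof (induction l' arbitrary: y)
  case 0 then show ?case by simp
next
  case (Suc l'')
  have st: "\<forall>Y\<in>set Xs. finite Y \<and> Y \<noteq> {}" "\<forall>l. Suc l < length Xs \<longrightarrow> Max (Xs ! l) < Min (Xs ! Suc l)"
    using assms(1) unfolding is_stack_def by auto
  have f1: "finite (Xs ! l'')" "Xs ! l'' \<noteq> {}" using st(1) Suc.prems(2) by auto
  have f2: "finite (Xs ! Suc l'')" using st(1) Suc.prems(2) by auto
  have m: "Max (Xs ! l'') < Min (Xs ! Suc l'')" using st(2) Suc.prems(2) by blast
  have my: "Min (Xs ! Suc l'') \<le> y" using f2 Suc.prems(4) by simp
  show ?case
  proof (cases "l = l''")
    case True
    then have "x \<le> Max (Xs ! l'')" using f1 Suc.prems(3) by simp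
    then show ?thesis using m my by simp
  next
    case False
    then have "l < l''" using Suc.prems(1) by simp
    have "Max (Xs ! l'') \<in> Xs ! l''" using f1 by simp
    then have "x < Max (Xs ! l'')" using Suc.IH[OF \<open>l < l''\<close>] Suc.prems by simp
    then show ?thesis using m my by simp
  qed
qed

lemma stackI:
  assumes "\<forall>Y\<in>set Xs. finite Y \<and> Y \<noteq> {}"
    "\<And>l l' x y. l < l' \<Longrightarrow> l' < length Xs \<Longrightarrow> x \<in> Xs ! l \<Longrightarrow> y \<in> Xs ! l' \<Longrightarrow> x < y"
  shows "is_stack Xs"
  unfolding is_stack_def
proof (intro conjI allI impI)
  fix l assume l: "Suc l < length Xs"
  have "finite (Xs ! l)" "Xs ! l \<noteq> {}" "finite (Xs ! Suc l)" "Xs ! Suc l \<noteq> {}"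
    using assms(1) l by auto
  then have "Max (Xs ! l) \<in> Xs ! l" "Min (Xs ! Suc l) \<in> Xs ! Suc l" by auto
  then show "Max (Xs ! l) < Min (Xs ! Suc l)" using assms(2)[of l "Suc l"] l by simp
qed (use assms(1) in blast)

definition stk :: "nat set list \<Rightarrow> bool" where
  "stk Xs \<longleftrightarrow> (\<forall>Y\<in>set Xs. finite Y \<and> Y \<noteq> {}) \<and> sorted_wrt (\<lambda>A B. \<forall>x\<in>A. \<forall>y\<in>B. x < y) Xs"

lemma stack_stk: "is_stack Xs \<longleftrightarrow> stk Xs"
proof
  assume a: "is_stack Xs"
  have "sorted_wrt (\<lambda>A B. \<forall>x\<in>A. \<forall>y\<in>B. x < y) Xs"
    unfolding sorted_wrt_iff_nth_less using stack_lt[OF a] by blast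
  then show "stk Xs" using a unfolding stk_def is_stack_def by blast
next
  assume a: "stk Xs"
  show "is_stack Xs"
  proof (rule stackI)
    show "\<forall>Y\<in>set Xs. finite Y \<and> Y \<noteq> {}" using a unfolding stk_def by blast
    fix l l' x y assume "l < l'" "l' < length Xs" "x \<in> Xs ! l" "y \<in> Xs ! l'"
    then show "x < y" using a unfolding stk_def sorted_wrt_iff_nth_less by blast
  qed
qed

lemma oml_union:
  assumes "stk Xs" "\<forall>Y\<in>set Xs. omega_mult_large d m Y"
  shows "omega_mult_large d (m * length Xs) (\<Union>(set Xs))"
  using assms
proof (induction Xs)
  case Nil
  show ?case unfolding omega_mult_large_def
    by (rule exI[of _ "[]"]) (simp add: is_stack_def)
next
  case (Cons A R)
  have sR: "stk R" using Cons.prems(1) unfolding stk_def by simp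
  have AR: "\<forall>x\<in>A. \<forall>y\<in>\<Union>(set R). x < y" using Cons.prems(1) unfolding stk_def by auto
  obtain WR where WR: "is_stack WR" "length WR = m * length R" "\<forall>Y\<in>set WR. omega_pow_large d Y" "\<Union>(set R) = \<Union>(set WR)"
    using Cons.IH[OF sR] Cons.prems(2) unfolding omega_mult_large_def by auto
  obtain WA where WA: "is_stack WA" "length WA = m" "\<forall>Y\<in>set WA. omega_pow_large d Y" "A = \<Union>(set WA)"
    using Cons.prems(2) unfolding omega_mult_large_def by auto
  have sA: "stk WA" and sW: "stk WR" using WA(1) WR(1) stack_stk by blast+
  have cross: "\<forall>U\<in>set WA. \<forall>V\<in>set WR. \<forall>x\<in>U. \<forall>y\<in>V. x < y" using AR WA(4) WR(4) by blast
  have "stk (WA @ WR)" using sA sW cross unfolding stk_def sorted_wrt_append by auto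
  then have st: "is_stack (WA @ WR)" using stack_stk by blast
  have len: "length (WA @ WR) = m * length (A # R)" using WA(2) WR(2) by simp
  have pl: "\<forall>Y\<in>set (WA @ WR). omega_pow_large d Y" using WA(3) WR(3) by auto
  have un: "\<Union>(set (A # R)) = \<Union>(set (WA @ WR))" using WA(4) WR(4) by auto
  show ?case unfolding omega_mult_large_def
    using st len pl un by blast
qed

lemma la2: "large_aux e W \<Longrightarrow> 0 \<notin> W \<Longrightarrow> 2 \<le> card W"
proof (cases e)
  case 0
  assume a: "large_aux e W" "0 \<notin> W"
  then have f: "finite W" "W \<noteq> {}" "card W > Min W" using 0 by auto
  then have "Min W \<in> W" by simp
  then have "Min W \<noteq> 0" using a(2) by (intro notI) simp
  then show ?thesis using f(3) by simp
next
  case (Suc e')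
  assume a: "large_aux e W" "0 \<notin> W"
  then obtain Xs where f: "finite W" "W \<noteq> {}" "is_stack Xs" "length Xs = Min W" "W - {Min W} = \<Union>(set Xs)"
    using Suc by auto
  have "Min W \<in> W" using f by simp
  then have "Min W \<noteq> 0" using a(2) by (intro notI) simp
  then have "Xs ! 0 \<in> set Xs" using f(4) by simp
  then have "Xs ! 0 \<noteq> {}" using f(3) unfolding is_stack_def by blast
  then obtain a where "a \<in> W - {Min W}" using f(5) \<open>Xs ! 0 \<in> set Xs\<close> by blast
  then have "{Min W, a} \<subseteq> W" "card {Min W, a} = 2" using \<open>Min W \<in> W\<close> by auto
  then have "card {Min W, a} \<le> card W" using card_mono[OF f(1)] by blast
  then show ?thesis using \<open>card {Min W, a} = 2\<close> by simp
qed

lemma card2: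
  assumes "persistent d m k i Y" "d \<ge> 1" "m \<ge> 1" "0 \<notin> Y"
  shows "2 \<le> card Y"
proof -
  obtain Z where Z: "Z \<subseteq> Y" "omega_mult_large d m Z" using pers_large[OF assms(1)] by blast
  then obtain Ws where W: "is_stack Ws" "length Ws = m" "\<forall>W\<in>set Ws. omega_pow_large d W" "Z = \<Union>(set Ws)"
    unfolding omega_mult_large_def by blast
  have "Ws ! 0 \<in> set Ws" using W(2) assms(3) by simp
  then have la: "large_aux (d - 1) (Ws ! 0)" using W(3) unfolding omega_pow_large_def by blast
  have sub: "Ws ! 0 \<subseteq> Y" using \<open>Ws ! 0 \<in> set Ws\<close> W(4) Z(1) by blast
  then have "2 \<le> card (Ws ! 0)" using la2[OF la] assms(4) by blast
  moreover have "finite Y" using pers_ne[OF assms(1)] by blast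
  ultimately show ?thesis using card_mono[OF _ sub] by linarith
qed


lemma stack_fin: "is_stack Xs \<Longrightarrow> l < length Xs \<Longrightarrow> finite (Xs ! l) \<and> Xs ! l \<noteq> {}"
  unfolding is_stack_def by simp

lemma Pp_chain:
  assumes st: "is_stack Xs" and Yf: "\<forall>l<length Xs. Yf l \<subseteq> Xs ! l \<and> persistent d m k i (Yf l) \<and> Pp k (Xs ! l) (Yf l)"
    and d: "d \<ge> 1" "m \<ge> 1" and j: "2 * j < length Xs"
  shows "Pp k (\<Union>l\<in>{..2*j}. Xs ! l) (\<Union>j'\<in>{..j}. Yf (2*j'))"
  using j
proof (induction j)
  case 0
  then show ?case using Yf by simp
next
  case (Suc j)
  let ?X = "\<Union>l\<in>{..2*j}. Xs ! l"
  let ?G = "Xs ! Suc (2*j)"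
  let ?B = "Xs ! Suc (Suc (2*j))"
  let ?Y = "\<Union>j'\<in>{..j}. Yf (2*j')"
  let ?YG = "Yf (Suc (2*j))"
  let ?YB = "Yf (Suc (Suc (2*j)))"
  have lt: "Suc (Suc (2*j)) < length Xs" using Suc.prems by simp
  have IH: "Pp k ?X ?Y" using Suc.IH lt by simp
  have finX: "finite ?X" using stack_fin[OF st] lt by auto
  have finG: "finite ?G" "?G \<noteq> {}" and finB: "finite ?B" "?B \<noteq> {}" using stack_fin[OF st] lt by auto
  have "0 < length Xs" using lt by linarith
  then have ne0: "Xs ! 0 \<noteq> {}" using stack_fin[OF st, of 0] by blast
  have neX: "?X \<noteq> {}" using ne0 by auto
  have XG: "\<forall>x\<in>?X. \<forall>g\<in>?G. x < g"
  proof (intro ballI)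
    fix x g assume "x \<in> ?X" "g \<in> ?G"
    then obtain l where "l \<le> 2*j" "x \<in> Xs ! l" by auto
    moreover have "l < Suc (2*j)" using \<open>l \<le> 2*j\<close> by simp
    moreover have "Suc (2*j) < length Xs" using lt by simp
    ultimately show "x < g" using stack_lt[OF st _ _ _ \<open>g \<in> ?G\<close>] by blast
  qed
  have GB: "\<forall>g\<in>?G. \<forall>b\<in>?B. g < b"
    using stack_lt[OF st, of "Suc (2*j)" "Suc (Suc (2*j))"] lt by blast
  have YX: "?Y \<subseteq> ?X"
  proof
    fix y assume "y \<in> ?Y"
    then obtain j' where j': "j' \<le> j" "y \<in> Yf (2*j')" by auto
    then have "2*j' < length Xs" using lt by simp
    then have "y \<in> Xs ! (2*j')" using Yf j' by blast
    then show "y \<in> ?X" using j' by auto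
  qed
  have "Yf 0 \<noteq> {}" using Yf pers_ne lt by (metis zero_less_iff_neq_zero less_nat_zero_code)
  moreover have "Yf (2*0) \<subseteq> ?Y" by blast
  ultimately have neY: "?Y \<noteq> {}" by auto
  have YG: "?YG \<subseteq> ?G" "persistent d m k i ?YG" and PG: "Pp k ?G ?YG" using Yf lt by auto
  have "0 \<notin> ?G"
  proof
    assume "0 \<in> ?G"
    obtain x where "x \<in> Xs ! 0" using ne0 by blast
    moreover have "Suc (2*j) < length Xs" using lt by simp
    ultimately have "x < 0" using stack_lt[OF st, of 0 "Suc (2*j)" x 0] \<open>0 \<in> ?G\<close> by blast
    then show False by simp
  qed
  then have "0 \<notin> ?YG" using YG(1) by blast
  then have cYG: "2 \<le> card ?YG" using card2[OF YG(2) d] by blast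
  have YB: "?YB \<subseteq> ?B" "persistent d m k i ?YB" and PB: "Pp k ?B ?YB" using Yf lt by auto
  have neYB: "?YB \<noteq> {}" using pers_ne[OF YB(2)] by blast
  have g: "Pp k (?X \<union> ?G \<union> ?B) (?Y \<union> ?YB)"
    using glue[OF finX finG(1) finB(1) neX finG(2) finB(2) XG GB YX neY YG(1) cYG YB(1) neYB IH PG PB] .
  have e1: "(\<Union>l\<in>{..2*Suc j}. Xs ! l) = ?X \<union> ?G \<union> ?B" by (auto simp: atMost_Suc)
  have e2: "(\<Union>j'\<in>{..Suc j}. Yf (2*j')) = ?Y \<union> ?YB" by (auto simp: atMost_Suc)
  show ?case unfolding e1 e2 using g .
qed


theorem lemma2p10:
  fixes d m n k i :: nat and Xs :: "nat set list"
  assumes "d \<ge> 1" and "m \<ge> 1" and "n \<ge> 1" and "k \<ge> 1"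
    and "is_stack Xs"
    and "length Xs = 2 ^ i * n - 2 ^ i + 1"
    and "\<forall>l < length Xs. persistent d m k i (Xs ! l)"
  shows "persistent d (m * n) k i (\<Union>(set Xs))"
  using assms(5,6,7)
proof (induction i arbitrary: Xs)
  case 0
  have len: "length Xs = n" using 0 assms(3) by simp
  have all: "\<forall>Y\<in>set Xs. omega_mult_large d m Y"
  proof
    fix Y assume "Y \<in> set Xs"
    then obtain l where "l < length Xs" "Y = Xs ! l" by (auto simp: in_set_conv_nth)
    then show "omega_mult_large d m Y" using 0(3) by simp
  qed
  have o: "omega_mult_large d (m * n) (\<Union>(set Xs))"
    using oml_union[OF _ all] 0(1) stack_stk len by metis
  have fin: "finite (\<Union>(set Xs))" using 0(1) unfolding is_stack_def by auto
  have "0 < length Xs" using len assms(3) by simp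
  then have "Xs ! 0 \<in> set Xs" "Xs ! 0 \<noteq> {}" using stack_fin[OF 0(1), of 0] by auto
  then have ne: "\<Union>(set Xs) \<noteq> {}" by blast
  show ?case using o fin ne by simp
next
  case (Suc i)
  obtain n' where n': "n = Suc n'" using assms(3) by (cases n) auto
  define M where "M = 2 ^ i * n - 2 ^ i + 1"
  have M: "M = 2 ^ i * n' + 1" unfolding M_def n' by simp
  have N: "length Xs = 2 * 2 ^ i * n' + 1" using Suc.prems(2) unfolding n' by simp
  have st: "is_stack Xs" using Suc.prems(1) .
  have "\<forall>l\<in>{..<length Xs}. \<exists>Y. Y \<subseteq> Xs ! l \<and> persistent d m k i Y \<and> Pp k (Xs ! l) Y"
  proof
    fix l assume "l \<in> {..<length Xs}"
    then have "persistent d m k (Suc i) (Xs ! l)" using Suc.prems(3) by simp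
    then show "\<exists>Y. Y \<subseteq> Xs ! l \<and> persistent d m k i Y \<and> Pp k (Xs ! l) Y" unfolding persistent_Suc by blast
  qed
  from bchoice[OF this] obtain Yf where Yf0: "\<forall>l\<in>{..<length Xs}. Yf l \<subseteq> Xs ! l \<and> persistent d m k i (Yf l) \<and> Pp k (Xs ! l) (Yf l)"
    by blast
  then have Yf: "\<forall>l<length Xs. Yf l \<subseteq> Xs ! l \<and> persistent d m k i (Yf l) \<and> Pp k (Xs ! l) (Yf l)" by simp
  define Ys where "Ys = map (\<lambda>j. Yf (2*j)) [0..<M]"
  have lenYs: "length Ys = 2 ^ i * n - 2 ^ i + 1" unfolding Ys_def M_def by simp
  have Ysn: "Ys ! j = Yf (2*j)" if "j < M" for j unfolding Ys_def using that by simp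
  have jlt: "2*j < length Xs" if "j < M" for j using that M N by simp
  have persYs: "\<forall>l<length Ys. persistent d m k i (Ys ! l)"
  proof (intro allI impI)
    fix l assume "l < length Ys"
    then have "l < M" unfolding Ys_def by simp
    then show "persistent d m k i (Ys ! l)" using Ysn jlt Yf by simp
  qed
  have stYs: "is_stack Ys"
  proof (rule stackI)
    show "\<forall>Y\<in>set Ys. finite Y \<and> Y \<noteq> {}"
    proof
      fix Y assume "Y \<in> set Ys"
      then obtain l where "l < length Ys" "Y = Ys ! l" by (auto simp: in_set_conv_nth)
      then show "finite Y \<and> Y \<noteq> {}" using persYs pers_ne by blast
    qed
  next
    fix l l' x y assume a: "l < l'" "l' < length Ys" "x \<in> Ys ! l" "y \<in> Ys ! l'"
    then have "l < M" "l' < M" unfolding Ys_def by simp_all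
    then have "x \<in> Xs ! (2*l)" "y \<in> Xs ! (2*l')" using a Ysn jlt Yf by blast+
    moreover have "2*l < 2*l'" "2*l' < length Xs" using a(1) jlt \<open>l' < M\<close> by simp_all
    ultimately show "x < y" using stack_lt[OF st] by blast
  qed
  have IH: "persistent d (m * n) k i (\<Union>(set Ys))" using Suc.IH[OF stYs lenYs persYs] .
  have M1: "M - 1 < M" using M by simp
  have ch: "Pp k (\<Union>l\<in>{..2*(M-1)}. Xs ! l) (\<Union>j'\<in>{..M-1}. Yf (2*j'))"
    using Pp_chain[OF st Yf assms(1,2) jlt[OF M1]] .
  have e1: "{..2*(M-1)} = {..<length Xs}" using M N by auto
  have e1': "(\<Union>l\<in>{..<length Xs}. Xs ! l) = \<Union>(set Xs)" by (auto simp: in_set_conv_nth) (use nth_mem in blast)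
  have e2: "{..M-1} = {..<M}" using M by auto
  have e2': "(\<Union>j'\<in>{..<M}. Yf (2*j')) = \<Union>(set Ys)" unfolding Ys_def by auto
  have P: "Pp k (\<Union>(set Xs)) (\<Union>(set Ys))" using ch unfolding e1 e1' e2 e2' .
  have sub: "\<Union>(set Ys) \<subseteq> \<Union>(set Xs)"
  proof
    fix y assume "y \<in> \<Union>(set Ys)"
    then obtain j where "j < M" "y \<in> Yf (2*j)" unfolding Ys_def by auto
    then have "y \<in> Xs ! (2*j)" "2*j < length Xs" using jlt Yf by blast+
    then show "y \<in> \<Union>(set Xs)" by auto
  qed
  have fin: "finite (\<Union>(set Xs))" using st unfolding is_stack_def by auto
  have "0 < length Xs" using N by simp
  then have "Xs ! 0 \<in> set Xs" "Xs ! 0 \<noteq> {}" using stack_fin[OF st, of 0] by auto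
  then have ne: "\<Union>(set Xs) \<noteq> {}" by blast
  show ?case unfolding persistent_Suc using fin ne sub IH P by blast
qed

end
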